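(* Let $\Omega\subseteq\mathbb{R}^N$ be an open set with $\mathcal{L}^N(\Omega)<+\infty$, and let $(p_n)$ be a sequence of measurable functions $p_n:\overline{\Omega}\to(1,+\infty)$ such that $p_n^-\to+\infty$ as $n\to\infty$ and there exists $\beta>1$ with $p_n^+\le\beta p_n^-$ for all $n\in\mathbb{N}$. Let $u:\Omega\to\overline{\mathbb{R}}$ be a measurable function. Then the following are equivalent: (i) $u\in L^\infty(\Omega)$; (ii) $\lim_{n\to\infty}\|u\|_{p_n(\cdot)}$ exists and is a real number. Moreover, if (i) or (ii) holds, then $\|u\|_\infty=\lim_{n\to\infty}\|u\|_{p_n(\cdot)}$.
   Context: $p_n^-:=\operatorname{ess\,inf}_{\overline\Omega}p_n$, $p_n^+:=\operatorname{ess\,sup}_{\overline\Omega}p_n$. For a measurable exponent $p$ and measurable $u$, the Luxemburg norm is $\|u\|_{p(\cdot)}:=\inf\{\lambda>0:\int_\Omega|u(x)/\lambda|^{p(x)}dx\le1\}$ (with $\inf\emptyset=+\infty$). *)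

theory Defs
  imports "HOL-Analysis.Analysis"
begin

definition ess_inf_on :: "'a::euclidean_space set \<Rightarrow> ('a \<Rightarrow> real) \<Rightarrow> ereal" where
  "ess_inf_on S f = Sup {z::ereal. AE x in restrict_space lebesgue S. z \<le> ereal (f x)}"

definition ess_sup_on :: "'a::euclidean_space set \<Rightarrow> ('a \<Rightarrow> real) \<Rightarrow> ereal" where
  "ess_sup_on S f = Inf {z::ereal. AE x in restrict_space lebesgue S. ereal (f x) \<le> z}"

definition linf_norm :: "'a::euclidean_space set \<Rightarrow> ('a \<Rightarrow> ereal) \<Rightarrow> ereal" where
  "linf_norm \<Omega> u = Inf {c::ereal. 0 \<le> c \<and> (AE x in restrict_space lebesgue \<Omega>. \<bar>u x\<bar> \<le> c)}"

definition modular_integrand :: "('a \<Rightarrow> real) \<Rightarrow> ('a \<Rightarrow> ereal) \<Rightarrow> real \<Rightarrow> 'a \<Rightarrow> ennreal" where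
  "modular_integrand p u lam x =
     (if \<bar>u x\<bar> = \<infinity> then \<infinity> else ennreal ((\<bar>real_of_ereal (u x)\<bar> / lam) powr p x))"

text \<open>Luxemburg norm, with Inf of the empty set = +infinity.\<close>
definition lux_norm :: "'a::euclidean_space set \<Rightarrow> ('a \<Rightarrow> real) \<Rightarrow> ('a \<Rightarrow> ereal) \<Rightarrow> ereal" where
  "lux_norm \<Omega> p u = Inf {ereal lam | lam. lam > 0 \<and>
       (\<integral>\<^sup>+ x \<in> \<Omega>. modular_integrand p u lam x \<partial>lebesgue) \<le> 1}"

end

theory Submission
  imports Defs
begin

abbreviation modint :: "'a::euclidean_space set \<Rightarrow> ('a \<Rightarrow> real) \<Rightarrow> ('a \<Rightarrow> ereal) \<Rightarrow> real \<Rightarrow> ennreal" where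
  "modint \<Omega> p u lam \<equiv> (\<integral>\<^sup>+ x \<in> \<Omega>. modular_integrand p u lam x \<partial>lebesgue)"

lemma lux_nonneg: "0 \<le> lux_norm \<Omega> p u"
  unfolding lux_norm_def by (rule Inf_greatest) auto

lemma lux_le: "lam > 0 \<Longrightarrow> modint \<Omega> p u lam \<le> 1 \<Longrightarrow> lux_norm \<Omega> p u \<le> ereal lam"
  unfolding lux_norm_def by (rule Inf_lower) blast

lemma lux_ge:
  assumes "\<And>lam. 0 < lam \<Longrightarrow> lam \<le> l0 \<Longrightarrow> 1 < modint \<Omega> p u lam"
  shows "ereal l0 \<le> lux_norm \<Omega> p u"
  unfolding lux_norm_def
proof (rule Inf_greatest, clarify)
  fix lam assume "0 < lam" "modint \<Omega> p u lam \<le> 1"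
  then show "ereal l0 \<le> ereal lam" using assms[of lam] by (cases "lam \<le> l0") auto
qed

lemma modint_lower:
  fixes \<Omega> :: "'a::euclidean_space set"
  assumes A: "A \<in> sets lebesgue" "A \<subseteq> \<Omega>" "\<And>x. x \<in> A \<Longrightarrow> \<not> \<bar>u x\<bar> \<le> ereal t"
    and K: "AE x in lebesgue. x \<in> \<Omega> \<longrightarrow> K \<le> p x" "K \<ge> 0"
    and l: "0 < lam" "lam \<le> l0" "0 < l0" "l0 < t"
    and fin: "emeasure lebesgue A < \<infinity>"
    and big: "(t/l0) powr K * measure lebesgue A > 1"
  shows "1 < modint \<Omega> p u lam"
proof -
  have "(\<integral>\<^sup>+ x. ennreal ((t/l0) powr K) * indicator A x \<partial>lebesgue)
        \<le> (\<integral>\<^sup>+ x. modular_integrand p u lam x * indicator \<Omega> x \<partial>lebesgue)"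
  proof (rule nn_integral_mono_AE)
    show "AE x in lebesgue. ennreal ((t/l0) powr K) * indicator A x
          \<le> modular_integrand p u lam x * indicator \<Omega> x"
      using K(1)
    proof eventually_elim
      case (elim x)
      show ?case
      proof (cases "x \<in> A")
        case False then show ?thesis by simp
      next
        case True
        hence xO: "x \<in> \<Omega>" using A by auto
        have Kp: "K \<le> p x" using elim xO by auto
        show ?thesis
        proof (cases "\<bar>u x\<bar> = \<infinity>")
          case True then show ?thesis using xO by (simp add: modular_integrand_def)
        next
          case False
          then have eq: "\<bar>u x\<bar> = ereal \<bar>real_of_ereal (u x)\<bar>"
            by (cases "u x") auto
          have gt: "t < \<bar>real_of_ereal (u x)\<bar>"
            using A(3)[OF True] eq by (metis ereal_less_eq(3) linorder_not_le)
          have r1: "1 \<le> t/l0" using l by simp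
          have "t/l0 \<le> \<bar>real_of_ereal (u x)\<bar> / lam"
          proof -
            have "t/l0 \<le> t/lam" using l by (intro divide_left_mono) auto
            also have "\<dots> \<le> \<bar>real_of_ereal (u x)\<bar> / lam" using gt l
              by (intro divide_right_mono) auto
            finally show ?thesis .
          qed
          then have b: "(t/l0) powr p x \<le> (\<bar>real_of_ereal (u x)\<bar> / lam) powr p x"
            using K(2) Kp l by (intro powr_mono2) auto
          have "(t/l0) powr K \<le> (\<bar>real_of_ereal (u x)\<bar> / lam) powr p x"
            using powr_mono[OF Kp r1] b by (rule order_trans)
          then show ?thesis using False xO True
            by (simp add: modular_integrand_def ennreal_leI)
        qed
      qed
    qed
  qed
  moreover have "(\<integral>\<^sup>+ x. ennreal ((t/l0) powr K) * indicator A x \<partial>lebesgue)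
      = ennreal ((t/l0) powr K) * emeasure lebesgue A"
    using A(1) by (simp add: nn_integral_cmult_indicator)
  moreover have "emeasure lebesgue A = ennreal (measure lebesgue A)"
    using fin by (simp add: emeasure_eq_ennreal_measure)
  moreover have "ennreal ((t/l0) powr K) * ennreal (measure lebesgue A)
      = ennreal ((t/l0) powr K * measure lebesgue A)"
    by (simp add: ennreal_mult)
  moreover have "1 < ennreal ((t/l0) powr K * measure lebesgue A)"
    using big by (simp add: ennreal_less_iff)
  ultimately show ?thesis
    by (metis (no_types) order_less_le_trans)
qed

lemma modint_upper:
  fixes \<Omega> :: "'a::euclidean_space set"
  assumes O: "\<Omega> \<in> sets lebesgue" "AE x in lebesgue. x \<in> \<Omega> \<longrightarrow> \<bar>u x\<bar> \<le> ereal c"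
    and K: "AE x in lebesgue. x \<in> \<Omega> \<longrightarrow> K \<le> p x" "K \<ge> 0"
    and l: "0 \<le> c" "c < lam"
    and fin: "emeasure lebesgue \<Omega> < \<infinity>"
    and small: "(c/lam) powr K * measure lebesgue \<Omega> \<le> 1"
  shows "modint \<Omega> p u lam \<le> 1"
proof -
  have "(\<integral>\<^sup>+ x. modular_integrand p u lam x * indicator \<Omega> x \<partial>lebesgue)
      \<le> (\<integral>\<^sup>+ x. ennreal ((c/lam) powr K) * indicator \<Omega> x \<partial>lebesgue)"
  proof (rule nn_integral_mono_AE)
    show "AE x in lebesgue. modular_integrand p u lam x * indicator \<Omega> x
          \<le> ennreal ((c/lam) powr K) * indicator \<Omega> x"
      using K(1) O(2)
    proof eventually_elim
      case (elim x)
      show ?case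
      proof (cases "x \<in> \<Omega>")
        case False then show ?thesis by simp
      next
        case xO: True
        have Kp: "K \<le> p x" using elim xO by auto
        have ub: "\<bar>u x\<bar> \<le> ereal c" using elim xO by auto
        then have nf: "\<bar>u x\<bar> \<noteq> \<infinity>" by auto
        then have eq: "\<bar>u x\<bar> = ereal \<bar>real_of_ereal (u x)\<bar>"
          by (cases "u x") auto
        have le: "\<bar>real_of_ereal (u x)\<bar> \<le> c"
          using ub eq by (metis ereal_less_eq(3))
        have "(\<bar>real_of_ereal (u x)\<bar> / lam) powr p x \<le> (c/lam) powr p x"
        proof (rule powr_mono2)
          show "0 \<le> p x" using K(2) Kp by simp
          show "0 \<le> \<bar>real_of_ereal (u x)\<bar> / lam" using l by (intro divide_nonneg_pos abs_ge_zero) auto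
          show "\<bar>real_of_ereal (u x)\<bar> / lam \<le> c / lam" using le l by (simp add: divide_right_mono)
        qed
        also have "\<dots> \<le> (c/lam) powr K"
          using l Kp by (intro powr_mono') auto
        finally show ?thesis using nf xO
          by (simp add: modular_integrand_def ennreal_leI)
      qed
    qed
  qed
  moreover have "(\<integral>\<^sup>+ x. ennreal ((c/lam) powr K) * indicator \<Omega> x \<partial>lebesgue)
      = ennreal ((c/lam) powr K) * emeasure lebesgue \<Omega>"
    using O(1) by (simp add: nn_integral_cmult_indicator)
  moreover have "emeasure lebesgue \<Omega> = ennreal (measure lebesgue \<Omega>)"
    using fin by (simp add: emeasure_eq_ennreal_measure)
  moreover have "ennreal ((c/lam) powr K) * ennreal (measure lebesgue \<Omega>)
      = ennreal ((c/lam) powr K * measure lebesgue \<Omega>)"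
    by (simp add: ennreal_mult)
  moreover have "ennreal ((c/lam) powr K * measure lebesgue \<Omega>) \<le> 1"
    using small by (simp add: ennreal_le_1)
  ultimately show ?thesis
    by (metis (no_types) order_trans)
qed

lemma K_exists_low:
  fixes r m :: real
  assumes "1 < r" "0 < m"
  shows "\<exists>K\<ge>0. 1 < r powr K * m"
proof -
  define K where "K = max 0 (ln (2/m) / ln r)"
  have lr: "ln r > 0" using assms by simp
  have "r powr (ln (2/m) / ln r) = 2/m"
    using assms lr by (simp add: powr_def)
  moreover have "r powr (ln (2/m) / ln r) \<le> r powr K"
    unfolding K_def using assms by (intro powr_mono) auto
  ultimately have "2/m \<le> r powr K" by simp
  then have "2 \<le> r powr K * m" using assms by (simp add: field_simps)
  then show ?thesis unfolding K_def by (intro exI[of _ K]) (auto simp: K_def)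
qed

lemma K_exists_up:
  fixes r m :: real
  assumes "0 \<le> r" "r < 1" "0 \<le> m"
  shows "\<exists>K\<ge>0. r powr K * m \<le> 1"
proof (cases "r = 0 \<or> m = 0")
  case True then show ?thesis by (intro exI[of _ 0]) auto
next
  case False
  then have r0: "0 < r" "0 < m" using assms by auto
  define K where "K = max 0 (ln m / (- ln r))"
  have lr: "ln r < 0" using assms r0 by simp
  have "r powr (ln m / (- ln r)) = 1/m"
    using r0 lr by (simp add: powr_def exp_minus field_simps)
  moreover have "r powr K \<le> r powr (ln m / (- ln r))"
    unfolding K_def using assms by (intro powr_mono') auto
  ultimately have "r powr K \<le> 1/m" by simp
  then have "r powr K * m \<le> 1" using r0 by (simp add: field_simps)
  then show ?thesis unfolding K_def by (intro exI[of _ K]) (auto simp: K_def)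
qed

theorem proposition3p3:
  fixes \<Omega> :: "'a::euclidean_space set"
    and p :: "nat \<Rightarrow> 'a \<Rightarrow> real"
    and u :: "'a \<Rightarrow> ereal"
    and \<beta> :: real
  assumes "open \<Omega>"
    and "emeasure lebesgue \<Omega> < \<infinity>"
    and "\<And>n. p n \<in> borel_measurable (restrict_space lebesgue (closure \<Omega>))"
    and "\<And>n x. x \<in> closure \<Omega> \<Longrightarrow> p n x > 1"
    and "(\<lambda>n. ess_inf_on (closure \<Omega>) (p n)) \<longlonglongrightarrow> \<infinity>"
    and "\<beta> > 1"
    and "\<And>n. ess_sup_on (closure \<Omega>) (p n) \<le> ereal \<beta> * ess_inf_on (closure \<Omega>) (p n)"
    and "u \<in> borel_measurable (restrict_space lebesgue \<Omega>)"
  shows "(linf_norm \<Omega> u < \<infinity> \<longleftrightarrow> (\<exists>L::real. (\<lambda>n. lux_norm \<Omega> (p n) u) \<longlonglongrightarrow> ereal L))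
         \<and> (linf_norm \<Omega> u < \<infinity> \<longrightarrow> (\<lambda>n. lux_norm \<Omega> (p n) u) \<longlonglongrightarrow> linf_norm \<Omega> u)"
proof -
  have Om: "\<Omega> \<in> sets lebesgue"
    by (metis assms(1) borel_open sets_completionI_sets sets_lborel)
  have Cl: "closure \<Omega> \<in> sets lebesgue"
    by (metis closed_closure borel_closed sets_completionI_sets sets_lborel)
  have Kev: "\<forall>\<^sub>F n in sequentially. AE x in lebesgue. x \<in> \<Omega> \<longrightarrow> K \<le> p n x" for K
  proof -
    have "\<forall>\<^sub>F n in sequentially. ereal K < ess_inf_on (closure \<Omega>) (p n)"
      using assms(5) by (rule order_tendstoD(1)) simp
    then show ?thesis
    proof eventually_elim
      case (elim n)
      then obtain z where z: "AE x in restrict_space lebesgue (closure \<Omega>). z \<le> ereal (p n x)"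
        "ereal K < z"
        unfolding ess_inf_on_def less_Sup_iff by auto
      have "AE x in restrict_space lebesgue (closure \<Omega>). ereal K \<le> ereal (p n x)"
        using z(1) by (rule eventually_mono) (metis z(2) order_trans less_imp_le)
      then have "AE x in lebesgue. x \<in> closure \<Omega> \<longrightarrow> ereal K \<le> ereal (p n x)"
        using Cl by (subst (asm) AE_restrict_space_iff) auto
      then show ?case
        by (rule eventually_mono) (use closure_subset in auto)
    qed
  qed
  have fin: "emeasure lebesgue A < \<infinity>" if "A \<subseteq> \<Omega>" "A \<in> sets lebesgue" for A
    using emeasure_mono[OF that(1) Om] assms(2) by (simp add: order_le_less_trans)
  have low: "\<forall>\<^sub>F n in sequentially. ereal l0 \<le> lux_norm \<Omega> (p n) u"
    if l: "0 < l0" "l0 < t" and nAE: "\<not> (AE x in restrict_space lebesgue \<Omega>. \<bar>u x\<bar> \<le> ereal t)" for t l0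
  proof -
    define A where "A = {x \<in> space (restrict_space lebesgue \<Omega>). \<not> \<bar>u x\<bar> \<le> ereal t}"
    note [measurable] = assms(8)
    have AR: "A \<in> sets (restrict_space lebesgue \<Omega>)" unfolding A_def by measurable
    have AO: "A \<subseteq> \<Omega>" unfolding A_def by (auto simp: space_restrict_space)
    have AL: "A \<in> sets lebesgue" using AR Om by (simp add: sets_restrict_space_iff)
    have "emeasure (restrict_space lebesgue \<Omega>) A \<noteq> 0"
      using nAE AE_iff_measurable[OF AR, of "\<lambda>x. \<bar>u x\<bar> \<le> ereal t"] A_def by auto
    then have "emeasure lebesgue A \<noteq> 0"
      using Om AO by (simp add: emeasure_restrict_space)
    moreover have Afin: "emeasure lebesgue A < \<infinity>" using fin AO AL by blast
    ultimately have mpos: "0 < measure lebesgue A"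
      by (simp add: emeasure_eq_ennreal_measure measure_nonneg order_less_le)
    obtain K where K: "K \<ge> 0" "1 < (t/l0) powr K * measure lebesgue A"
      using K_exists_low[OF _ mpos, of "t/l0"] l by auto
    show ?thesis
      using Kev[of K]
    proof eventually_elim
      case (elim n)
      show ?case
      proof (rule lux_ge)
        fix lam :: real assume "0 < lam" "lam \<le> l0"
        then show "1 < modint \<Omega> (p n) u lam"
          using modint_lower[OF AL AO _ elim K(1) _ _ l Afin K(2)] A_def AO
          by (auto simp: space_restrict_space)
      qed
    qed
  qed
  have up: "\<forall>\<^sub>F n in sequentially. lux_norm \<Omega> (p n) u \<le> ereal lam"
    if c: "0 \<le> c" "c < lam" and cAE: "AE x in restrict_space lebesgue \<Omega>. \<bar>u x\<bar> \<le> ereal c" for c lam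
  proof -
    have cAE': "AE x in lebesgue. x \<in> \<Omega> \<longrightarrow> \<bar>u x\<bar> \<le> ereal c"
      using cAE Om by (subst (asm) AE_restrict_space_iff) auto
    have lam0: "0 < lam" using c by simp
    obtain K where K: "K \<ge> 0" "(c/lam) powr K * measure lebesgue \<Omega> \<le> 1"
      using K_exists_up[of "c/lam" "measure lebesgue \<Omega>"] c lam0 by (auto simp: measure_nonneg)
    show ?thesis
      using Kev[of K]
    proof eventually_elim
      case (elim n)
      show ?case
        by (rule lux_le[OF lam0 modint_upper[OF Om cAE' elim K(1) c _ K(2)]])
           (use assms(2) in auto)
    qed
  qed
  define M where "M = linf_norm \<Omega> u"
  have M0: "0 \<le> M" unfolding M_def linf_norm_def by (rule Inf_greatest) auto
  have notin: "\<not> (AE x in restrict_space lebesgue \<Omega>. \<bar>u x\<bar> \<le> ereal t)"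
    if "0 \<le> t" "ereal t < M" for t
  proof
    assume "AE x in restrict_space lebesgue \<Omega>. \<bar>u x\<bar> \<le> ereal t"
    then have "M \<le> ereal t" unfolding M_def linf_norm_def using that(1)
      by (intro Inf_lower) auto
    with that(2) show False by simp
  qed
  have inset: "\<exists>c. 0 \<le> c \<and> c < lam \<and> (AE x in restrict_space lebesgue \<Omega>. \<bar>u x\<bar> \<le> ereal c)"
    if lamM: "M < ereal lam" for lam
  proof -
    obtain c' where c': "0 \<le> c'" "AE x in restrict_space lebesgue \<Omega>. \<bar>u x\<bar> \<le> c'" "c' < ereal lam"
    proof -
      have "Inf {c::ereal. 0 \<le> c \<and> (AE x in restrict_space lebesgue \<Omega>. \<bar>u x\<bar> \<le> c)} < ereal lam"
        using lamM by (simp add: M_def linf_norm_def)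
      then show ?thesis using that by (subst (asm) Inf_less_iff) blast
    qed
    then obtain c where "c' = ereal c" by (cases c') auto
    with c' show ?thesis by auto
  qed
  have conv: "(\<lambda>n. lux_norm \<Omega> (p n) u) \<longlonglongrightarrow> M" if Mfin: "M < \<infinity>"
  proof (rule order_tendstoI)
    fix a assume aM: "a < M"
    show "\<forall>\<^sub>F n in sequentially. a < lux_norm \<Omega> (p n) u"
    proof (cases "a < 0")
      case True then show ?thesis
        by (intro always_eventually allI order_less_le_trans[OF True lux_nonneg])
    next
      case False
      obtain l0 where l0: "a < ereal l0" "ereal l0 < M" using ereal_dense2[OF aM] by auto
      obtain t where t: "ereal l0 < ereal t" "ereal t < M" using ereal_dense2[OF l0(2)] by auto
      have "0 < l0" using False l0(1) by (cases a) auto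
      moreover have "l0 < t" using t by simp
      ultimately have "\<forall>\<^sub>F n in sequentially. ereal l0 \<le> lux_norm \<Omega> (p n) u"
        using low notin t by auto
      then show ?thesis by eventually_elim (use l0 in auto)
    qed
  next
    fix b assume bM: "M < b"
    obtain lam where lam: "M < ereal lam" "ereal lam < b" using ereal_dense2[OF bM] by auto
    obtain c where "0 \<le> c" "c < lam" "AE x in restrict_space lebesgue \<Omega>. \<bar>u x\<bar> \<le> ereal c"
      using inset[OF lam(1)] by auto
    then have "\<forall>\<^sub>F n in sequentially. lux_norm \<Omega> (p n) u \<le> ereal lam" using up by auto
    then show "\<forall>\<^sub>F n in sequentially. lux_norm \<Omega> (p n) u < b"
      by eventually_elim (use lam in auto)
  qed
  have Mback: "M < \<infinity>" if L: "(\<lambda>n. lux_norm \<Omega> (p n) u) \<longlonglongrightarrow> ereal L" for L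
  proof (rule ccontr)
    assume "\<not> M < \<infinity>"
    then have Minf: "M = \<infinity>" by simp
    have "\<forall>\<^sub>F n in sequentially. ereal (\<bar>L\<bar> + 1) \<le> lux_norm \<Omega> (p n) u"
      using notin[of "2 * \<bar>L\<bar> + 2"] Minf by (intro low[of _ "2 * \<bar>L\<bar> + 2"]) auto
    then have "ereal (\<bar>L\<bar> + 1) \<le> ereal L"
      by (intro tendsto_lowerbound[OF L]) auto
    then show False by simp
  qed
  show ?thesis
  proof (intro conjI impI iffI)
    assume "linf_norm \<Omega> u < \<infinity>"
    then have "M < \<infinity>" by (simp add: M_def)
    then have "M = ereal (real_of_ereal M)" using M0 by (cases M) auto
    then show "\<exists>L::real. (\<lambda>n. lux_norm \<Omega> (p n) u) \<longlonglongrightarrow> ereal L"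
      using conv \<open>M < \<infinity>\<close> by metis
  next
    assume "\<exists>L::real. (\<lambda>n. lux_norm \<Omega> (p n) u) \<longlonglongrightarrow> ereal L"
    then show "linf_norm \<Omega> u < \<infinity>" using Mback by (auto simp: M_def)
  next
    assume "linf_norm \<Omega> u < \<infinity>"
    then show "(\<lambda>n. lux_norm \<Omega> (p n) u) \<longlonglongrightarrow> linf_norm \<Omega> u"
      using conv by (simp add: M_def)
  qed
qed

end
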